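(* Let $X$ be a continuum and $T\subset X$ a thick subcontinuum. Then every null-aposyndetic point of $X$ lies in the boundary $\overline T\cap\overline{X-T}$ of $T$.
   Context: A continuum is a nondegenerate compact connected Hausdorff space. A subcontinuum $T\subset X$ is thick if $T\neq X$ and $T$ has nonempty interior. A point $x\in X$ is null-aposyndetic if no proper subcontinuum of $X$ contains $x$ in its interior. *)

theory Defs
  imports "HOL-Analysis.Analysis"
begin

definition continuum :: "'a topology \<Rightarrow> bool" where
  "continuum X \<longleftrightarrow> compact_space X \<and> connected_space X \<and> Hausdorff_space X
     \<and> (\<exists>a\<in>topspace X. \<exists>b\<in>topspace X. a \<noteq> b)"

definition subcontinuum :: "'a topology \<Rightarrow> 'a set \<Rightarrow> bool" where
  "subcontinuum X T \<longleftrightarrow> T \<subseteq> topspace X \<and> T \<noteq> {} \<and> compactin X T \<and> connectedin X T"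

definition thick :: "'a topology \<Rightarrow> 'a set \<Rightarrow> bool" where
  "thick X T \<longleftrightarrow> subcontinuum X T \<and> T \<noteq> topspace X \<and> X interior_of T \<noteq> {}"

definition null_aposyndetic :: "'a topology \<Rightarrow> 'a \<Rightarrow> bool" where
  "null_aposyndetic X x \<longleftrightarrow> x \<in> topspace X \<and>
     \<not> (\<exists>T. subcontinuum X T \<and> T \<noteq> topspace X \<and> x \<in> X interior_of T)"

end

theory Submission
  imports Defs "HOL-Analysis.Analysis"
begin

theorem mainTheorem17:
  fixes X :: "'a topology" and T :: "'a set" and x :: 'a
  assumes "continuum X" and "thick X T" and "null_aposyndetic X x"
  shows "x \<in> X closure_of T \<inter> X closure_of (topspace X - T)"
proof -
  have cs: "compact_space X" and cn: "connected_space X" and hs: "Hausdorff_space X"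
    using assms(1) by (auto simp: continuum_def)
  have Tsub: "T \<subseteq> topspace X" and Tne: "T \<noteq> {}" and Tc: "compactin X T"
    and Tcon: "connectedin X T" and TX: "T \<noteq> topspace X" and Ti: "X interior_of T \<noteq> {}"
    using assms(2) by (auto simp: thick_def subcontinuum_def)
  have xX: "x \<in> topspace X" and na: "\<And>K. subcontinuum X K \<Longrightarrow> K \<noteq> topspace X \<Longrightarrow> x \<notin> X interior_of K"
    using assms(3) by (auto simp: null_aposyndetic_def)
  have Tcl: "closedin X T" using compactin_imp_closedin[OF hs Tc] .
  define H where "H = X closure_of (topspace X - T)"
  have Hcl: "closedin X H" by (simp add: H_def)
  have HX: "H \<subseteq> topspace X" using Hcl closedin_subset by blast
  have XTH: "topspace X - T \<subseteq> H" unfolding H_def by (simp add: closure_of_subset)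
  have opXT: "openin X (topspace X - T)" using Tcl by blast
  have x2: "x \<in> H"
  proof (rule ccontr)
    assume "x \<notin> H"
    then have "x \<in> X interior_of T" using xX by (simp add: interior_of_closure_of H_def)
    moreover have "subcontinuum X T" using Tsub Tne Tc Tcon by (simp add: subcontinuum_def)
    ultimately show False using na TX by blast
  qed
  have pH: "\<exists>p\<in>topspace X. p \<notin> H"
    using Ti interior_of_closure_of[of X T] H_def by auto
  have x1: "x \<in> T"
  proof (rule ccontr)
    assume xT: "x \<notin> T"
    have xint: "x \<in> X interior_of H"
      using interior_of_maximal[OF XTH opXT] xT xX by blast
    show False
    proof (cases "connectedin X H")
      case True
      have "subcontinuum X H" using True Hcl HX x2 closedin_compact_space[OF cs Hcl]
        by (auto simp: subcontinuum_def)
      moreover have "H \<noteq> topspace X" using pH by blast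
      ultimately show False using na xint by blast
    next
      case False
      then obtain E1 E2 where E: "closedin X E1" "closedin X E2" "H \<subseteq> E1 \<union> E2"
        "E1 \<inter> E2 \<inter> H = {}" "E1 \<inter> H \<noteq> {}" "E2 \<inter> H \<noteq> {}"
        using HX by (auto simp: connectedin_closedin)
      obtain H1 H2 where Hs: "closedin X H1" "closedin X H2" "H = H1 \<union> H2" "H1 \<inter> H2 = {}"
        "H1 \<noteq> {}" "H2 \<noteq> {}" "x \<in> H1"
      proof (cases "x \<in> E1")
        case True
        show ?thesis
          by (rule that[of "E1 \<inter> H" "E2 \<inter> H"]) (use E Hcl True x2 in auto)
      next
        case False
        show ?thesis
          by (rule that[of "E2 \<inter> H" "E1 \<inter> H"]) (use E Hcl False x2 in auto)
      qed
      define K where "K = H1 \<union> T"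
      have Kcl: "closedin X K" using Hs Tcl by (simp add: K_def closedin_Un)
      have KX: "K \<subseteq> topspace X" using Kcl closedin_subset by blast
      have XK: "topspace X = K \<union> H2" using XTH Hs Tsub HX unfolding K_def by blast
      have Kcon: "connectedin X K"
        unfolding connectedin_closedin
      proof (intro conjI KX notI)
        assume "\<exists>E1 E2. closedin X E1 \<and> closedin X E2 \<and> K \<subseteq> E1 \<union> E2 \<and>
             E1 \<inter> E2 \<inter> K = {} \<and> E1 \<inter> K \<noteq> {} \<and> E2 \<inter> K \<noteq> {}"
        then obtain F1 F2 where F: "closedin X F1" "closedin X F2" "K \<subseteq> F1 \<union> F2"
          "F1 \<inter> F2 \<inter> K = {}" "F1 \<inter> K \<noteq> {}" "F2 \<inter> K \<noteq> {}" by blast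
        have TF: "F1 \<inter> T = {} \<or> F2 \<inter> T = {}"
        proof -
          have "T \<subseteq> F1 \<union> F2" "F1 \<inter> F2 \<inter> T = {}" using F unfolding K_def by blast+
          then show ?thesis using Tcon F(1,2) unfolding connectedin_closedin by meson
        qed
        have gen: "False" if G: "closedin X G1" "closedin X G2" "K \<subseteq> G1 \<union> G2"
          "G1 \<inter> G2 \<inter> K = {}" "G2 \<inter> K \<noteq> {}" "G2 \<inter> T = {}" for G1 G2
        proof -
          have "closedin X ((G1 \<inter> K) \<union> H2)" using G Kcl Hs by (intro closedin_Un closedin_Int)
          moreover have "closedin X (G2 \<inter> K)" using G Kcl by (intro closedin_Int)
          moreover have "topspace X \<subseteq> ((G1 \<inter> K) \<union> H2) \<union> (G2 \<inter> K)" using XK G by blast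
          moreover have "((G1 \<inter> K) \<union> H2) \<inter> (G2 \<inter> K) = {}"
            using G Hs unfolding K_def by blast
          moreover have "(G1 \<inter> K) \<union> H2 \<noteq> {}" using Hs by blast
          moreover have "G2 \<inter> K \<noteq> {}" using G(5) .
          ultimately show False using cn unfolding connected_space_closedin by meson
        qed
        show False
        proof (cases "F2 \<inter> T = {}")
          case True
          then show False using gen[OF F(1,2,3,4,6)] by blast
        next
          case False
          then have "F1 \<inter> T = {}" using TF by blast
          then show False using gen[of F2 F1] F by (auto simp: Int_commute Un_commute)
        qed
      qed
      have "subcontinuum X K" using Kcl KX Kcon closedin_compact_space[OF cs Kcl] Tne
        by (auto simp: subcontinuum_def K_def)
      moreover have "K \<noteq> topspace X"
      proof
        assume KeX: "K = topspace X"
        obtain h where h: "h \<in> H2" using Hs by blast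
        have "openin X (topspace X - H1)" using Hs by blast
        moreover have "h \<in> topspace X - H1" using h Hs HX by blast
        moreover have "h \<in> X closure_of (topspace X - T)" using h Hs H_def by blast
        ultimately have "\<exists>z\<in>topspace X - T. z \<in> topspace X - H1"
          unfolding closure_of_def by blast
        then obtain z where "z \<in> topspace X - H1" "z \<in> topspace X - T" by blast
        then show False using KeX K_def by blast
      qed
      moreover have "x \<in> X interior_of K"
      proof -
        have "openin X (topspace X - H2)" using Hs by blast
        moreover have "topspace X - H2 \<subseteq> K" using XK by blast
        moreover have "x \<in> topspace X - H2" using xX Hs by blast
        ultimately show ?thesis using interior_of_maximal by blast
      qed
      ultimately show False using na by blast
    qed
  qed
  show ?thesis using x1 x2 Tsub closure_of_subset H_def by blast
qed

end
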